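(* Over any finite alphabet $A$, the logics $\mathrm{TL}[\mathrm{Th}]$, $\mathrm{TL}[\mathrm{BTh}]$, $\mathrm{TL}[\mathrm{Inv}]$, $\mathrm{TL}[\mathrm{BInv}]$, $FO^2[<,\mathrm{Th}]$ and $FO^2[<,\mathrm{Inv}]$ all define the same family of languages $L\subseteq A^*$.
   Context: Words $w\in A^*$ have positions $1,\dots,|w|$, $w(i)$ the $i$-th letter. First-order logic uses $<$ and unary predicates $a(x)$ ($a\in A$); sentences define languages, and in the empty word existential sentences are false and universal ones true. $a(x,y)$ abbreviates $\exists z(x<z\wedge z<y\wedge a(z))$; $(a,k)(x,y)$ (for $k\ge0$) means $x<y$ and at least $k$ positions strictly between $x$ and $y$ carry the letter $a$. $FO^2[<,\mathrm{Inv}]$ is the two-variable logic with $<$, $a(x)$ and $a(x,y)$; $FO^2[<,\mathrm{Th}]$ is the two-variable logic with $<$, $a(x)$ and all $(a,k)(x,y)$. Temporal logic: a threshold constraint is an expression $\#B\sim c$ with $B\subseteq A$, integer $c\ge0$, and $\sim\in\{<,\le,>,\ge,=\}$; for $1\le i<j\le|w|$, $(w,i,j)$ satisfies it if $|\{k: i<k<j,\ w(k)\in B\}|\sim c$; satisfaction extends to boolean combinations of constraints in the obvious way. Temporal formulas are built from atomic formulas $a\in A$ by $\wedge,\vee,\neg$ and modalities $\mathsf{F}_g\phi$, $\mathsf{P}_g\phi$ where $g$ is a (boolean combination of) constraint(s). They are interpreted in marked words $(w,i)$, $1\le i\le|w|$: $(w,i)\models a$ iff $w(i)=a$; $(w,i)\models\mathsf{F}_g\phi$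 iff there is $j>i$ with $(w,i,j)$ satisfying $g$ and $(w,j)\models\phi$; $(w,i)\models\mathsf{P}_g\phi$ iff there is $j<i$ with $(w,j,i)$ satisfying $g$ and $(w,j)\models\phi$. A formula defines the language of words $w$ with $(w,1)\models\phi$. $\mathrm{TL}[\mathrm{BTh}]$ allows $g$ to be any boolean combination of threshold constraints; $\mathrm{TL}[\mathrm{Th}]$ restricts $g$ to a single (atomic) threshold constraint; $\mathrm{TL}[\mathrm{Inv}]$ restricts $g$ to a single constraint of the form $\#B=0$ (invariant constraint); $\mathrm{TL}[\mathrm{BInv}]$ allows boolean combinations of invariant constraints. *)

theory Defs
  imports Main
begin

text \<open>Words over the finite alphabet 'a (the alphabet A is UNIV :: 'a set) are lists.
  Positions are 0-indexed internally: paper position i corresponds to list index i - 1.\<close>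

datatype cmp = CLt | CLe | CGt | CGe | CEq

fun cmp_sem :: "cmp \<Rightarrow> nat \<Rightarrow> nat \<Rightarrow> bool" where
  "cmp_sem CLt n c = (n < c)"
| "cmp_sem CLe n c = (n \<le> c)"
| "cmp_sem CGt n c = (n > c)"
| "cmp_sem CGe n c = (n \<ge> c)"
| "cmp_sem CEq n c = (n = c)"

datatype 'a constr = Constr "'a set" cmp nat

datatype 'a guard = GAtom "'a constr" | GNot "'a guard" | GAnd "'a guard" "'a guard"
  | GOr "'a guard" "'a guard"

definition count_between :: "'a list \<Rightarrow> nat \<Rightarrow> nat \<Rightarrow> 'a set \<Rightarrow> nat" where
  "count_between w i j B = card {k. i < k \<and> k < j \<and> w ! k \<in> B}"

fun constr_sem :: "'a list \<Rightarrow> nat \<Rightarrow> nat \<Rightarrow> 'a constr \<Rightarrow> bool" where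
  "constr_sem w i j (Constr B r c) = cmp_sem r (count_between w i j B) c"

fun guard_sem :: "'a list \<Rightarrow> nat \<Rightarrow> nat \<Rightarrow> 'a guard \<Rightarrow> bool" where
  "guard_sem w i j (GAtom c) = constr_sem w i j c"
| "guard_sem w i j (GNot g) = (\<not> guard_sem w i j g)"
| "guard_sem w i j (GAnd g h) = (guard_sem w i j g \<and> guard_sem w i j h)"
| "guard_sem w i j (GOr g h) = (guard_sem w i j g \<or> guard_sem w i j h)"

datatype 'a tl = TLetter 'a | TAnd "'a tl" "'a tl" | TOr "'a tl" "'a tl" | TNot "'a tl"
  | TF "'a guard" "'a tl" | TP "'a guard" "'a tl"

fun tl_sat :: "'a list \<Rightarrow> nat \<Rightarrow> 'a tl \<Rightarrow> bool" where
  "tl_sat w i (TLetter a) = (w ! i = a)"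
| "tl_sat w i (TAnd \<phi> \<psi>) = (tl_sat w i \<phi> \<and> tl_sat w i \<psi>)"
| "tl_sat w i (TOr \<phi> \<psi>) = (tl_sat w i \<phi> \<or> tl_sat w i \<psi>)"
| "tl_sat w i (TNot \<phi>) = (\<not> tl_sat w i \<phi>)"
| "tl_sat w i (TF g \<phi>) = (\<exists>j. i < j \<and> j < length w \<and> guard_sem w i j g \<and> tl_sat w j \<phi>)"
| "tl_sat w i (TP g \<phi>) = (\<exists>j. j < i \<and> guard_sem w j i g \<and> tl_sat w j \<phi>)"

text \<open>Language of a formula: words w with (w,1) |= phi (first position = index 0);
  in particular only nonempty words.\<close>
definition tl_lang :: "'a tl \<Rightarrow> 'a list set" where
  "tl_lang \<phi> = {w. w \<noteq> [] \<and> tl_sat w 0 \<phi>}"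

fun tl_guards :: "'a tl \<Rightarrow> 'a guard set" where
  "tl_guards (TLetter a) = {}"
| "tl_guards (TAnd \<phi> \<psi>) = tl_guards \<phi> \<union> tl_guards \<psi>"
| "tl_guards (TOr \<phi> \<psi>) = tl_guards \<phi> \<union> tl_guards \<psi>"
| "tl_guards (TNot \<phi>) = tl_guards \<phi>"
| "tl_guards (TF g \<phi>) = insert g (tl_guards \<phi>)"
| "tl_guards (TP g \<phi>) = insert g (tl_guards \<phi>)"

definition is_inv_constr :: "'a constr \<Rightarrow> bool" where
  "is_inv_constr c \<longleftrightarrow> (\<exists>B. c = Constr B CEq 0)"

fun guard_atoms :: "'a guard \<Rightarrow> 'a constr set" where
  "guard_atoms (GAtom c) = {c}"
| "guard_atoms (GNot g) = guard_atoms g"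
| "guard_atoms (GAnd g h) = guard_atoms g \<union> guard_atoms h"
| "guard_atoms (GOr g h) = guard_atoms g \<union> guard_atoms h"

definition guard_Th :: "'a guard \<Rightarrow> bool" where
  "guard_Th g \<longleftrightarrow> (\<exists>c. g = GAtom c)"

definition guard_BTh :: "'a guard \<Rightarrow> bool" where
  "guard_BTh g \<longleftrightarrow> True"

definition guard_Inv :: "'a guard \<Rightarrow> bool" where
  "guard_Inv g \<longleftrightarrow> (\<exists>c. g = GAtom c \<and> is_inv_constr c)"

definition guard_BInv :: "'a guard \<Rightarrow> bool" where
  "guard_BInv g \<longleftrightarrow> (\<forall>c \<in> guard_atoms g. is_inv_constr c)"

definition tl_family :: "('a guard \<Rightarrow> bool) \<Rightarrow> 'a list set set" where
  "tl_family G = {tl_lang \<phi> | \<phi>. \<forall>g \<in> tl_guards \<phi>. G g}"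

datatype var = VX | VY

datatype 'a fo2 = FLess var var | FEq var var | FLetter 'a var
  | FBtw 'a var var
  | FThr 'a nat var var
  | FNot "'a fo2" | FAnd "'a fo2" "'a fo2" | FOr "'a fo2" "'a fo2" | FEx var "'a fo2"

fun fo_sat :: "'a list \<Rightarrow> (var \<Rightarrow> nat) \<Rightarrow> 'a fo2 \<Rightarrow> bool" where
  "fo_sat w s (FLess x y) = (s x < s y)"
| "fo_sat w s (FEq x y) = (s x = s y)"
| "fo_sat w s (FLetter a x) = (w ! s x = a)"
| "fo_sat w s (FBtw a x y) = (\<exists>z. s x < z \<and> z < s y \<and> w ! z = a)"
| "fo_sat w s (FThr a k x y) = (s x < s y \<and> card {z. s x < z \<and> z < s y \<and> w ! z = a} \<ge> k)"
| "fo_sat w s (FNot \<phi>) = (\<not> fo_sat w s \<phi>)"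
| "fo_sat w s (FAnd \<phi> \<psi>) = (fo_sat w s \<phi> \<and> fo_sat w s \<psi>)"
| "fo_sat w s (FOr \<phi> \<psi>) = (fo_sat w s \<phi> \<or> fo_sat w s \<psi>)"
| "fo_sat w s (FEx x \<phi>) = (\<exists>p < length w. fo_sat w (s(x := p)) \<phi>)"

fun fo_free :: "'a fo2 \<Rightarrow> var set" where
  "fo_free (FLess x y) = {x, y}"
| "fo_free (FEq x y) = {x, y}"
| "fo_free (FLetter a x) = {x}"
| "fo_free (FBtw a x y) = {x, y}"
| "fo_free (FThr a k x y) = {x, y}"
| "fo_free (FNot \<phi>) = fo_free \<phi>"
| "fo_free (FAnd \<phi> \<psi>) = fo_free \<phi> \<union> fo_free \<psi>"
| "fo_free (FOr \<phi> \<psi>) = fo_free \<phi> \<union> fo_free \<psi>"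
| "fo_free (FEx x \<phi>) = fo_free \<phi> - {x}"

fun uses_Btw :: "'a fo2 \<Rightarrow> bool" where
  "uses_Btw (FBtw a x y) = True"
| "uses_Btw (FNot \<phi>) = uses_Btw \<phi>"
| "uses_Btw (FAnd \<phi> \<psi>) = (uses_Btw \<phi> \<or> uses_Btw \<psi>)"
| "uses_Btw (FOr \<phi> \<psi>) = (uses_Btw \<phi> \<or> uses_Btw \<psi>)"
| "uses_Btw (FEx x \<phi>) = uses_Btw \<phi>"
| "uses_Btw _ = False"

fun uses_Thr :: "'a fo2 \<Rightarrow> bool" where
  "uses_Thr (FThr a k x y) = True"
| "uses_Thr (FNot \<phi>) = uses_Thr \<phi>"
| "uses_Thr (FAnd \<phi> \<psi>) = (uses_Thr \<phi> \<or> uses_Thr \<psi>)"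
| "uses_Thr (FOr \<phi> \<psi>) = (uses_Thr \<phi> \<or> uses_Thr \<psi>)"
| "uses_Thr (FEx x \<phi>) = uses_Thr \<phi>"
| "uses_Thr _ = False"

text \<open>Language of a sentence (closed formula; the assignment is irrelevant).\<close>
definition fo_lang :: "'a fo2 \<Rightarrow> 'a list set" where
  "fo_lang \<phi> = {w. fo_sat w (\<lambda>_. 0) \<phi>}"

text \<open>FO2[<,Inv]: atoms <, =, a(x), a(x,y).  FO2[<,Th]: atoms <, =, a(x), (a,k)(x,y).\<close>
definition fo2_Inv_family :: "'a list set set" where
  "fo2_Inv_family = {fo_lang \<phi> | \<phi>. fo_free \<phi> = {} \<and> \<not> uses_Thr \<phi>}"

definition fo2_Th_family :: "'a list set set" where
  "fo2_Th_family = {fo_lang \<phi> | \<phi>. fo_free \<phi> = {} \<and> \<not> uses_Btw \<phi>}"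

end

theory Submission
  imports Defs "HOL-Library.FuncSet"
begin


definition lst :: "'a set \<Rightarrow> 'a list" where "lst B = (SOME xs. set xs = B)"
lemma set_lst: "finite B \<Longrightarrow> set (lst B) = B"
  unfolding lst_def by (metis (mono_tags) finite_list someI_ex)

definition TFalse :: "'a tl" where "TFalse = TAnd (TLetter undefined) (TNot (TLetter undefined))"
definition TTrue :: "'a tl" where "TTrue = TNot TFalse"

fun tdisj :: "'a tl list \<Rightarrow> 'a tl" where
  "tdisj [] = TFalse" | "tdisj (x#xs) = TOr x (tdisj xs)"

lemma sat_TFalse[simp]: "\<not> tl_sat w i TFalse" by (simp add: TFalse_def)
lemma sat_TTrue[simp]: "tl_sat w i TTrue" by (simp add: TTrue_def)
lemma sat_tdisj[simp]: "tl_sat w i (tdisj xs) \<longleftrightarrow> (\<exists>x\<in>set xs. tl_sat w i x)" by (induct xs) auto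
lemma guards_TFalse[simp]: "tl_guards TFalse = {}" by (simp add: TFalse_def)
lemma guards_TTrue[simp]: "tl_guards TTrue = {}" by (simp add: TTrue_def)
lemma guards_tdisj[simp]: "tl_guards (tdisj xs) = (\<Union>x\<in>set xs. tl_guards x)" by (induct xs) auto

definition cnt :: "'a list \<Rightarrow> nat \<Rightarrow> nat \<Rightarrow> 'a \<Rightarrow> nat" where
  "cnt w i j a = card {k. i < k \<and> k < j \<and> w ! k = a}"

lemma fin_btw[simp]: "finite {k::nat. i < k \<and> k < j \<and> P k}"
proof -
  have "{k::nat. i < k \<and> k < j \<and> P k} \<subseteq> {..<j}" by auto
  then show ?thesis by (rule finite_subset) simp
qed

lemma count_between_sum: "finite B \<Longrightarrow> count_between w i j B = (\<Sum>a\<in>B. cnt w i j a)"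
proof (induct B rule: finite_induct)
  case empty then show ?case by (simp add: count_between_def)
next
  case (insert a B)
  have e: "{k. i<k \<and> k<j \<and> w!k \<in> insert a B} = {k. i<k \<and> k<j \<and> w!k = a} \<union> {k. i<k \<and> k<j \<and> w!k \<in> B}" by auto
  have "card ({k. i<k \<and> k<j \<and> w!k = a} \<union> {k. i<k \<and> k<j \<and> w!k \<in> B})
      = card {k. i<k \<and> k<j \<and> w!k = a} + card {k. i<k \<and> k<j \<and> w!k \<in> B}"
    by (rule card_Un_disjoint) (use insert in auto)
  then show ?case using insert e by (simp add: count_between_def cnt_def)
qed

lemma count_between_0: "count_between w i j B = 0 \<longleftrightarrow> (\<forall>k. i<k \<longrightarrow> k<j \<longrightarrow> w!k \<notin> B)"
  unfolding count_between_def by (subst card_eq_0_iff) auto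

lemma cnt_0: "cnt w i j a = 0 \<longleftrightarrow> (\<forall>k. i<k \<longrightarrow> k<j \<longrightarrow> w!k \<noteq> a)"
  unfolding cnt_def by (subst card_eq_0_iff) auto

lemma cnt_split: "i < p \<Longrightarrow> p < j \<Longrightarrow>
   cnt w i j a = cnt w i p a + (if w!p = a then 1 else 0) + cnt w p j a"
proof -
  assume ip: "i < p" and pj: "p < j"
  have e: "{k. i<k \<and> k<j \<and> w!k = a} = {k. i<k \<and> k<p \<and> w!k = a} \<union> ({k. k = p \<and> w!k = a} \<union> {k. p<k \<and> k<j \<and> w!k = a})"
    using ip pj by auto
  have c1: "card ({k. k = p \<and> w!k = a} \<union> {k. p<k \<and> k<j \<and> w!k = a}) = card {k. k = p \<and> w!k = a} + card {k. p<k \<and> k<j \<and> w!k = a}"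
    by (rule card_Un_disjoint) auto
  have c2: "card ({k. i<k \<and> k<p \<and> w!k = a} \<union> ({k. k = p \<and> w!k = a} \<union> {k. p<k \<and> k<j \<and> w!k = a}))
     = card {k. i<k \<and> k<p \<and> w!k = a} + card ({k. k = p \<and> w!k = a} \<union> {k. p<k \<and> k<j \<and> w!k = a})"
    by (rule card_Un_disjoint) auto
  have "{k. k = p \<and> w!k = a} = (if w!p = a then {p} else {})" by auto
  then have c3: "card {k. k = p \<and> w!k = a} = (if w!p = a then 1 else 0)" by simp
  show ?thesis unfolding cnt_def e c2 c1 c3 by simp
qed

type_synonym 'a req = "'a \<Rightarrow> bool \<times> nat"
definition req_ok :: "'a list \<Rightarrow> nat \<Rightarrow> nat \<Rightarrow> 'a req \<Rightarrow> bool" where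
  "req_ok w i j r \<longleftrightarrow> (\<forall>a. if fst (r a) then cnt w i j a = snd (r a) else snd (r a) \<le> cnt w i j a)"
definition freeS :: "'a req \<Rightarrow> 'a set" where "freeS r = {a. \<not> fst (r a) \<and> snd (r a) = 0}"
definition ginv :: "'a set \<Rightarrow> 'a guard" where "ginv B = GAtom (Constr B CEq 0)"
definition dec :: "'a req \<Rightarrow> 'a \<Rightarrow> 'a req" where "dec r b = r(b := (fst (r b), snd (r b) - 1))"

lemma sem_ginv[simp]: "guard_sem w i j (ginv B) \<longleftrightarrow> (\<forall>k. i<k \<longrightarrow> k<j \<longrightarrow> w!k \<notin> B)"
  by (simp add: ginv_def count_between_0)

primrec Fr :: "nat \<Rightarrow> 'a req \<Rightarrow> 'a tl \<Rightarrow> 'a tl" where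
  "Fr 0 r \<phi> = TF (ginv (- freeS r)) \<phi>"
| "Fr (Suc n) r \<phi> = tdisj (map (\<lambda>b. TF (ginv (- freeS r)) (TAnd (TLetter b) (Fr n (dec r b) \<phi>))) (lst {b. 0 < snd (r b)}))"

lemma sum_dec: "0 < snd (r b) \<Longrightarrow> (\<Sum>a\<in>UNIV. snd (dec r b a)) = (\<Sum>a\<in>UNIV. snd (r (a::'a::finite))) - 1"
proof -
  assume b: "0 < snd (r b)"
  have "(\<Sum>a\<in>UNIV. snd (dec r b a)) = snd (dec r b b) + (\<Sum>a\<in>UNIV-{b}. snd (dec r b a))"
    by (simp add: sum.remove)
  also have "(\<Sum>a\<in>UNIV-{b}. snd (dec r b a)) = (\<Sum>a\<in>UNIV-{b}. snd (r a))"
    by (rule sum.cong) (auto simp: dec_def)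
  also have "(\<Sum>a\<in>UNIV. snd (r a)) = snd (r b) + (\<Sum>a\<in>UNIV-{b}. snd (r a))"
    by (simp add: sum.remove)
  ultimately show ?thesis using b by (simp add: dec_def)
qed

lemma Fr_correct:
  "n = (\<Sum>a\<in>UNIV. snd (r (a::'a::finite))) \<Longrightarrow>
   tl_sat w i (Fr n r \<phi>) \<longleftrightarrow> (\<exists>j. i<j \<and> j<length w \<and> req_ok w i j r \<and> tl_sat w j \<phi>)"
proof (induct n arbitrary: r i)
  case 0
  then have z: "\<forall>a. snd (r a) = 0" by simp
  have "req_ok w i j r \<longleftrightarrow> (\<forall>k. i<k \<longrightarrow> k<j \<longrightarrow> w!k \<notin> - freeS r)" for j
    using z unfolding req_ok_def freeS_def by (auto simp: cnt_0)
  then show ?case by auto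
next
  case (Suc n)
  define P where "P = {b. 0 < snd (r b)}"
  have setP: "set (lst P) = P" by (simp add: set_lst)
  have ne: "P \<noteq> {}" using Suc.prems unfolding P_def by (auto intro: ccontr)
  have IH: "b \<in> P \<Longrightarrow> tl_sat w p (Fr n (dec r b) \<phi>) \<longleftrightarrow> (\<exists>j. p<j \<and> j<length w \<and> req_ok w p j (dec r b) \<and> tl_sat w j \<phi>)" for b p
  proof -
    assume "b \<in> P"
    then have "n = (\<Sum>a\<in>UNIV. snd (dec r b a))" using Suc.prems sum_dec[of r b] by (simp add: P_def)
    then show ?thesis by (rule Suc.hyps)
  qed
  have "tl_sat w i (Fr (Suc n) r \<phi>) \<longleftrightarrow> (\<exists>b\<in>P. \<exists>p. i<p \<and> p<length w \<and> (\<forall>k. i<k \<longrightarrow> k<p \<longrightarrow> w!k \<in> freeS r) \<and> w!p = b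
       \<and> (\<exists>j. p<j \<and> j<length w \<and> req_ok w p j (dec r b) \<and> tl_sat w j \<phi>))"
    using IH by (simp add: setP P_def[symmetric])
  also have "\<dots> \<longleftrightarrow> (\<exists>j. i<j \<and> j<length w \<and> req_ok w i j r \<and> tl_sat w j \<phi>)"
  proof
    assume "\<exists>b\<in>P. \<exists>p. i<p \<and> p<length w \<and> (\<forall>k. i<k \<longrightarrow> k<p \<longrightarrow> w!k \<in> freeS r) \<and> w!p = b
       \<and> (\<exists>j. p<j \<and> j<length w \<and> req_ok w p j (dec r b) \<and> tl_sat w j \<phi>)"
    then obtain b p j where bP: "b \<in> P" and ip: "i<p" and "p<length w" and fr: "\<forall>k. i<k \<longrightarrow> k<p \<longrightarrow> w!k \<in> freeS r"
      and wp: "w!p = b" and pj: "p<j" and jl: "j<length w" and rq: "req_ok w p j (dec r b)" and ph: "tl_sat w j \<phi>"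
      by blast
    have "req_ok w i j r" unfolding req_ok_def
    proof
      fix a
      have sp: "cnt w i j a = cnt w i p a + (if w!p = a then 1 else 0) + cnt w p j a"
        using cnt_split[OF ip pj] .
      have ra: "if fst (dec r b a) then cnt w p j a = snd (dec r b a) else snd (dec r b a) \<le> cnt w p j a"
        using rq unfolding req_ok_def by blast
      show "if fst (r a) then cnt w i j a = snd (r a) else snd (r a) \<le> cnt w i j a"
      proof (cases "a \<in> freeS r")
        case True then show ?thesis by (simp add: freeS_def)
      next
        case False
        then have "cnt w i p a = 0" using fr by (auto simp: cnt_0)
        then show ?thesis using sp ra bP wp by (cases "a = b") (auto simp: dec_def P_def split: if_splits)
      qed
    qed
    then show "\<exists>j. i<j \<and> j<length w \<and> req_ok w i j r \<and> tl_sat w j \<phi>"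
    proof -
      have "i < j" using ip pj by simp
      then show ?thesis using jl ph \<open>req_ok w i j r\<close> by blast
    qed
  next
    assume "\<exists>j. i<j \<and> j<length w \<and> req_ok w i j r \<and> tl_sat w j \<phi>"
    then obtain j where ij: "i<j" and jl: "j<length w" and rq: "req_ok w i j r" and ph: "tl_sat w j \<phi>" by blast
    obtain b0 where b0: "b0 \<in> P" using ne by blast
    have "cnt w i j b0 \<noteq> 0" using rq b0 unfolding req_ok_def P_def
      by (metis (mono_tags, lifting) mem_Collect_eq not_gr0 le_zero_eq)
    then obtain k0 where k0: "i<k0" "k0<j" "w!k0 \<in> P" using b0 by (auto simp: cnt_0)
    define p where "p = (LEAST k. i<k \<and> k<j \<and> w!k \<in> P)"
    have pp: "i<p \<and> p<j \<and> w!p \<in> P" unfolding p_def by (rule LeastI[of _ k0]) (use k0 in auto)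
    have pmin: "\<And>k. i<k \<Longrightarrow> k<p \<Longrightarrow> w!k \<notin> P"
      using pp unfolding p_def by (metis (mono_tags, lifting) not_less_Least order.strict_trans)
    have fr: "\<forall>k. i<k \<longrightarrow> k<p \<longrightarrow> w!k \<in> freeS r"
    proof (intro allI impI)
      fix k assume k: "i<k" "k<p"
      then have nP: "w!k \<notin> P" by (rule pmin)
      show "w!k \<in> freeS r"
      proof (rule ccontr)
        assume nf: "w!k \<notin> freeS r"
        then have "fst (r (w!k))" "snd (r (w!k)) = 0" using nP by (auto simp: freeS_def P_def)
        then have "cnt w i j (w!k) = 0" using rq unfolding req_ok_def by (metis (full_types))
        then show False using k pp by (auto simp: cnt_0)
      qed
    qed
    define b where "b = w!p"
    have "req_ok w p j (dec r b)" unfolding req_ok_def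
    proof
      fix a
      have sp: "cnt w i j a = cnt w i p a + (if w!p = a then 1 else 0) + cnt w p j a"
        using cnt_split[of i p j w a] pp by simp
      have ra: "if fst (r a) then cnt w i j a = snd (r a) else snd (r a) \<le> cnt w i j a"
        using rq unfolding req_ok_def by blast
      show "if fst (dec r b a) then cnt w p j a = snd (dec r b a) else snd (dec r b a) \<le> cnt w p j a"
      proof (cases "a \<in> freeS r")
        case True
        then have "a \<noteq> b" using pp by (auto simp: freeS_def P_def b_def)
        then show ?thesis using True by (simp add: freeS_def dec_def)
      next
        case False
        then have "cnt w i p a = 0" using fr by (auto simp: cnt_0)
        then show ?thesis using sp ra pp by (cases "a = b") (auto simp: dec_def P_def b_def split: if_splits)
      qed
    qed
    then show "\<exists>b\<in>P. \<exists>p. i<p \<and> p<length w \<and> (\<forall>k. i<k \<longrightarrow> k<p \<longrightarrow> w!k \<in> freeS r) \<and> w!p = b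
       \<and> (\<exists>j. p<j \<and> j<length w \<and> req_ok w p j (dec r b) \<and> tl_sat w j \<phi>)"
    proof -
      have pl: "p < length w" using pp jl by simp
      have bP: "b \<in> P" using pp b_def by simp
      show ?thesis
        apply (rule bexI[OF _ bP])
        apply (rule exI[of _ p])
        using pp pl fr b_def \<open>req_ok w p j (dec r b)\<close> jl ph by blast
    qed
  qed
  finally show ?case .
qed



fun gval :: "('a \<Rightarrow> nat) \<Rightarrow> 'a guard \<Rightarrow> bool" where
  "gval c (GAtom (Constr B r k)) = cmp_sem r (\<Sum>a\<in>B. c a) k"
| "gval c (GNot g) = (\<not> gval c g)"
| "gval c (GAnd g h) = (gval c g \<and> gval c h)"
| "gval c (GOr g h) = (gval c g \<or> gval c h)"

fun gmax :: "'a guard \<Rightarrow> nat" where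
  "gmax (GAtom (Constr B r k)) = k"
| "gmax (GNot g) = gmax g"
| "gmax (GAnd g h) = max (gmax g) (gmax h)"
| "gmax (GOr g h) = max (gmax g) (gmax h)"

lemma guard_gval: "guard_sem w i j g = gval (cnt w i j) (g :: ('a::finite) guard)"
proof (induct g)
  case (GAtom c) then show ?case by (cases c) (simp add: count_between_sum)
qed auto

lemma cmp_big: "k < n1 \<Longrightarrow> k < n2 \<Longrightarrow> cmp_sem r n1 k = cmp_sem r n2 k"
  by (cases r) auto

lemma gval_cap: "gmax g < M \<Longrightarrow> gval (\<lambda>a. min (c a) M) g = gval c (g :: ('a::finite) guard)"
proof (induct g)
  case (GAtom x)
  obtain B r k where x: "x = Constr B r k" by (cases x)
  have kM: "k < M" using GAtom x by simp
  show ?case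
  proof (cases "\<exists>a\<in>B. M \<le> c a")
    case True
    then obtain a where a: "a \<in> B" "M \<le> c a" by blast
    have "min (c a) M \<le> (\<Sum>a\<in>B. min (c a) M)" by (rule member_le_sum) (use a in auto)
    moreover have "c a \<le> (\<Sum>a\<in>B. c a)" by (rule member_le_sum) (use a in auto)
    ultimately show ?thesis using a kM x by (auto intro!: cmp_big)
  next
    case False
    then have "(\<Sum>a\<in>B. min (c a) M) = (\<Sum>a\<in>B. c a)" by (intro sum.cong) auto
    then show ?thesis using x by simp
  qed
qed auto

definition VV :: "nat \<Rightarrow> ('a \<Rightarrow> nat) set" where "VV M = {v. \<forall>a. v a \<le> M}"

lemma finite_VV: "finite (VV M :: (('a::finite) \<Rightarrow> nat) set)"
proof -
  have "(VV M :: ('a \<Rightarrow> nat) set) = PiE UNIV (\<lambda>_. {..M})" unfolding VV_def PiE_def Pi_def extensional_def by auto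
  then show ?thesis by (simp add: finite_PiE)
qed

definition rq :: "nat \<Rightarrow> ('a \<Rightarrow> nat) \<Rightarrow> 'a req" where "rq M v a = (v a < M, v a)"

lemma req_rq: "v \<in> VV M \<Longrightarrow> req_ok w i j (rq M v) \<longleftrightarrow> (\<lambda>a. min (cnt w i j a) M) = v"
proof -
  assume v: "v \<in> VV M"
  have pt: "(if v a < M then c = v a else v a \<le> c) \<longleftrightarrow> min c M = v a" for a c
  proof -
    have le: "v a \<le> M" using v by (simp add: VV_def)
    show ?thesis
    proof (cases "v a < M")
      case True then show ?thesis by (auto simp: min_def)
    next
      case False then have "v a = M" using le by simp
      then show ?thesis by (auto simp: min_def)
    qed
  qed
  show ?thesis unfolding req_ok_def rq_def fun_eq_iff fst_conv snd_conv using pt by presburger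
qed

definition TrF :: "('a::finite) guard \<Rightarrow> 'a tl \<Rightarrow> 'a tl" where
  "TrF g \<phi> = tdisj (map (\<lambda>v. Fr (\<Sum>a\<in>UNIV. v a) (rq (Suc (gmax g)) v) \<phi>) (lst {v \<in> VV (Suc (gmax g)). gval v g}))"

lemma TrF_correct: "tl_sat w i (TrF g \<phi>) \<longleftrightarrow> tl_sat w i (TF g \<phi>)"
proof -
  define M where "M = Suc (gmax g)"
  have s: "set (lst {v \<in> VV M. gval v g}) = {v \<in> VV M. gval v g}"
    by (rule set_lst, rule finite_subset[OF _ finite_VV]) auto
  have sn: "(\<Sum>a\<in>UNIV. v a) = (\<Sum>a\<in>UNIV. snd (rq M v a))" for v by (simp add: rq_def)
  have "tl_sat w i (TrF g \<phi>) \<longleftrightarrow> (\<exists>v \<in> VV M. gval v g \<and> (\<exists>j. i<j \<and> j<length w \<and> req_ok w i j (rq M v) \<and> tl_sat w j \<phi>))"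
    unfolding TrF_def M_def[symmetric] using Fr_correct[OF sn] by (simp add: s) blast
  also have "\<dots> \<longleftrightarrow> (\<exists>j. i<j \<and> j<length w \<and> gval (\<lambda>a. min (cnt w i j a) M) g \<and> tl_sat w j \<phi>)"
  proof
    assume "\<exists>v \<in> VV M. gval v g \<and> (\<exists>j. i<j \<and> j<length w \<and> req_ok w i j (rq M v) \<and> tl_sat w j \<phi>)"
    then show "\<exists>j. i<j \<and> j<length w \<and> gval (\<lambda>a. min (cnt w i j a) M) g \<and> tl_sat w j \<phi>"
      using req_rq by metis
  next
    assume "\<exists>j. i<j \<and> j<length w \<and> gval (\<lambda>a. min (cnt w i j a) M) g \<and> tl_sat w j \<phi>"
    then obtain j where j: "i<j" "j<length w" "gval (\<lambda>a. min (cnt w i j a) M) g" "tl_sat w j \<phi>" by blast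
    have v: "(\<lambda>a. min (cnt w i j a) M) \<in> VV M" by (simp add: VV_def)
    show "\<exists>v \<in> VV M. gval v g \<and> (\<exists>j. i<j \<and> j<length w \<and> req_ok w i j (rq M v) \<and> tl_sat w j \<phi>)"
      using j v req_rq[OF v] by blast
  qed
  also have "\<dots> \<longleftrightarrow> tl_sat w i (TF g \<phi>)"
    by (simp add: guard_gval gval_cap M_def)
  finally show ?thesis .
qed

lemma guards_Fr: "tl_guards (Fr n r \<phi>) \<subseteq> range ginv \<union> tl_guards \<phi>"
  by (induct n arbitrary: r) auto

lemma guards_TrF: "tl_guards (TrF g \<phi>) \<subseteq> range ginv \<union> tl_guards \<phi>"
  unfolding TrF_def using guards_Fr by fastforce

fun mir :: "'a tl \<Rightarrow> 'a tl" where
  "mir (TLetter a) = TLetter a"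
| "mir (TAnd \<phi> \<psi>) = TAnd (mir \<phi>) (mir \<psi>)"
| "mir (TOr \<phi> \<psi>) = TOr (mir \<phi>) (mir \<psi>)"
| "mir (TNot \<phi>) = TNot (mir \<phi>)"
| "mir (TF g \<phi>) = TP g (mir \<phi>)"
| "mir (TP g \<phi>) = TF g (mir \<phi>)"

lemma mir_mir[simp]: "mir (mir \<phi>) = \<phi>" by (induct \<phi>) auto
lemma guards_mir[simp]: "tl_guards (mir \<phi>) = tl_guards \<phi>" by (induct \<phi>) auto

lemma count_rev: "i < j \<Longrightarrow> j < length w \<Longrightarrow>
  count_between (rev w) (length w - 1 - j) (length w - 1 - i) B = count_between w i j B"
proof -
  assume ij: "i < j" and jl: "j < length w"
  define n where "n = length w"
  have e: "{k. n-1-j < k \<and> k < n-1-i \<and> rev w ! k \<in> B} = (\<lambda>k. n-1-k) ` {k. i<k \<and> k<j \<and> w!k \<in> B}"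
  proof (rule set_eqI, rule iffI)
    fix k assume k: "k \<in> {k. n-1-j < k \<and> k < n-1-i \<and> rev w ! k \<in> B}"
    then have "n-1-k \<in> {k. i<k \<and> k<j \<and> w!k \<in> B}" using ij jl by (auto simp: rev_nth n_def)
    moreover have "k = n-1-(n-1-k)" using k by auto
    ultimately show "k \<in> (\<lambda>k. n-1-k) ` {k. i<k \<and> k<j \<and> w!k \<in> B}" by blast
  next
    fix k assume "k \<in> (\<lambda>k. n-1-k) ` {k. i<k \<and> k<j \<and> w!k \<in> B}"
    then obtain m where m: "k = n-1-m" "i<m" "m<j" "w!m \<in> B" by blast
    have "rev w ! (n-1-m) = w ! m" using m ij jl by (simp add: rev_nth n_def Suc_diff_Suc)
    then show "k \<in> {k. n-1-j < k \<and> k < n-1-i \<and> rev w ! k \<in> B}" using m ij jl by (auto simp: n_def)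
  qed
  have "inj_on (\<lambda>k. n-1-k) {k. i<k \<and> k<j \<and> w!k \<in> B}"
    unfolding inj_on_def using jl by (auto simp: n_def)
  then show ?thesis unfolding count_between_def n_def[symmetric] e by (simp add: card_image)
qed

lemma guard_rev: "i < j \<Longrightarrow> j < length w \<Longrightarrow>
  guard_sem (rev w) (length w - 1 - j) (length w - 1 - i) g = guard_sem w i j g"
proof (induct g)
  case (GAtom c) then show ?case by (cases c) (use count_rev[of i j w] in auto)
qed auto

lemma mir_correct: "i < length w \<Longrightarrow> tl_sat (rev w) (length w - 1 - i) (mir \<phi>) \<longleftrightarrow> tl_sat w i \<phi>"
proof (induct \<phi> arbitrary: i)
  case (TLetter x) then show ?case by (simp add: rev_nth Suc_diff_Suc)
next
  case (TF g \<phi>)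
  let ?n = "length w"
  show ?case
  proof
    assume "tl_sat (rev w) (?n - 1 - i) (mir (TF g \<phi>))"
    then obtain j' where j': "j' < ?n - 1 - i" "guard_sem (rev w) j' (?n-1-i) g" "tl_sat (rev w) j' (mir \<phi>)" by auto
    define j where "j = ?n - 1 - j'"
    have jj: "j' = ?n - 1 - j" "i < j" "j < ?n" using j' TF.prems by (auto simp: j_def)
    have g: "guard_sem w i j g" using guard_rev[of i j w g] j'(2) jj by simp
    have p: "tl_sat w j \<phi>" using TF.hyps[OF jj(3)] j'(3) jj(1) by simp
    show "tl_sat w i (TF g \<phi>)" unfolding tl_sat.simps using g p jj by blast
  next
    assume "tl_sat w i (TF g \<phi>)"
    then obtain j where j: "i < j" "j < ?n" "guard_sem w i j g" "tl_sat w j \<phi>" by auto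
    have g: "guard_sem (rev w) (?n-1-j) (?n-1-i) g" using guard_rev[of i j w g] j by simp
    have p: "tl_sat (rev w) (?n-1-j) (mir \<phi>)" using TF.hyps[OF j(2)] j(4) by simp
    have l: "?n-1-j < ?n-1-i" using j by simp
    show "tl_sat (rev w) (?n - 1 - i) (mir (TF g \<phi>))" unfolding mir.simps tl_sat.simps
      apply (rule exI[of _ "?n-1-j"]) using g p l by simp
  qed
next
  case (TP g \<phi>)
  let ?n = "length w"
  show ?case
  proof
    assume "tl_sat (rev w) (?n - 1 - i) (mir (TP g \<phi>))"
    then obtain j' where j': "?n - 1 - i < j'" "j' < ?n" "guard_sem (rev w) (?n-1-i) j' g" "tl_sat (rev w) j' (mir \<phi>)" by auto
    define j where "j = ?n - 1 - j'"
    have jj: "j' = ?n - 1 - j" "j < i" "j < ?n" using j' TP.prems by (auto simp: j_def)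
    have g: "guard_sem w j i g" using guard_rev[of j i w g] j'(3) jj TP.prems by simp
    have p: "tl_sat w j \<phi>" using TP.hyps[OF jj(3)] j'(4) jj(1) by simp
    show "tl_sat w i (TP g \<phi>)" unfolding tl_sat.simps using g p jj by blast
  next
    assume "tl_sat w i (TP g \<phi>)"
    then obtain j where j: "j < i" "guard_sem w j i g" "tl_sat w j \<phi>" by auto
    have jl: "j < ?n" using j TP.prems by simp
    have g: "guard_sem (rev w) (?n-1-i) (?n-1-j) g" using guard_rev[of j i w g] j TP.prems by simp
    have p: "tl_sat (rev w) (?n-1-j) (mir \<phi>)" using TP.hyps[OF jl] j(3) by simp
    have l1: "?n-1-i < ?n-1-j" using j TP.prems by (simp add: diff_less_mono2)
    have l2: "?n-1-j < ?n" using j TP.prems by linarith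
    note l = l1 l2
    show "tl_sat (rev w) (?n - 1 - i) (mir (TP g \<phi>))" unfolding mir.simps tl_sat.simps
      apply (rule exI[of _ "?n-1-j"]) using g p l by simp
  qed
qed auto

lemma mir_correct2: "i < length w \<Longrightarrow> tl_sat w i (mir \<phi>) \<longleftrightarrow> tl_sat (rev w) (length w - 1 - i) \<phi>"
  using mir_correct[of "length w - 1 - i" "rev w" "\<phi>"] by simp

fun tr :: "('a::finite) tl \<Rightarrow> 'a tl" where
  "tr (TLetter a) = TLetter a"
| "tr (TAnd \<phi> \<psi>) = TAnd (tr \<phi>) (tr \<psi>)"
| "tr (TOr \<phi> \<psi>) = TOr (tr \<phi>) (tr \<psi>)"
| "tr (TNot \<phi>) = TNot (tr \<phi>)"
| "tr (TF g \<phi>) = TrF g (tr \<phi>)"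
| "tr (TP g \<phi>) = mir (TrF g (mir (tr \<phi>)))"

lemma tr_correct: "i < length w \<Longrightarrow> tl_sat w i (tr \<phi>) \<longleftrightarrow> tl_sat w i \<phi>"
proof (induct \<phi> arbitrary: i)
  case (TF g \<phi>) then show ?case by (auto simp: TrF_correct)
next
  case (TP g \<phi>)
  have "tl_sat w i (tr (TP g \<phi>)) \<longleftrightarrow> tl_sat (rev w) (length w - 1 - i) (TF g (mir (tr \<phi>)))"
    using TP.prems by (simp add: mir_correct2 TrF_correct)
  also have "\<dots> \<longleftrightarrow> tl_sat w i (TP g (tr \<phi>))"
    using mir_correct2[OF TP.prems, of "TF g (mir (tr \<phi>))"] by simp
  also have "\<dots> \<longleftrightarrow> tl_sat w i (TP g \<phi>)" using TP by auto
  finally show ?case .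
qed auto

lemma ginv_Inv: "guard_Inv (ginv B)" by (simp add: guard_Inv_def ginv_def is_inv_constr_def)

lemma tr_Inv: "g \<in> tl_guards (tr \<phi>) \<Longrightarrow> guard_Inv g"
proof (induct \<phi> arbitrary: g)
  case (TF x1 \<phi>) then show ?case using guards_TrF[of x1 "tr \<phi>"] ginv_Inv by auto
next
  case (TP x1 \<phi>) then show ?case using guards_TrF[of x1 "mir (tr \<phi>)"] ginv_Inv by auto
qed auto

lemma tl_lang_tr: "tl_lang (tr \<phi>) = tl_lang \<phi>"
  unfolding tl_lang_def using tr_correct by fastforce



datatype ord3 = LT | EQ | GT

type_synonym 'a trm = "'a tl \<times> 'a tl \<times> ord3 \<times> 'a guard"

fun osem :: "ord3 \<Rightarrow> nat \<Rightarrow> nat \<Rightarrow> bool" where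
  "osem LT i j = (i < j)" | "osem EQ i j = (i = j)" | "osem GT i j = (j < i)"

fun tsem :: "'a list \<Rightarrow> nat \<Rightarrow> nat \<Rightarrow> 'a trm \<Rightarrow> bool" where
  "tsem w i j (X,Y,q,G) = (tl_sat w i X \<and> tl_sat w j Y \<and> osem q i j \<and> guard_sem w (min i j) (max i j) G)"

definition dsem :: "'a list \<Rightarrow> nat \<Rightarrow> nat \<Rightarrow> 'a trm list \<Rightarrow> bool" where
  "dsem w i j D = (\<exists>t\<in>set D. tsem w i j t)"

definition Gtrue :: "'a guard" where "Gtrue = GAtom (Constr {} CEq 0)"
lemma Gtrue[simp]: "guard_sem w i j Gtrue" by (simp add: Gtrue_def count_between_def)

definition xonly :: "'a tl \<Rightarrow> 'a trm list" where
  "xonly X = [(X,TTrue,LT,Gtrue),(X,TTrue,EQ,Gtrue),(X,TTrue,GT,Gtrue)]"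
definition yonly :: "'a tl \<Rightarrow> 'a trm list" where
  "yonly Y = [(TTrue,Y,LT,Gtrue),(TTrue,Y,EQ,Gtrue),(TTrue,Y,GT,Gtrue)]"

lemma dsem_xonly[simp]: "dsem w i j (xonly X) \<longleftrightarrow> tl_sat w i X"
  unfolding dsem_def xonly_def by auto
lemma dsem_yonly[simp]: "dsem w i j (yonly Y) \<longleftrightarrow> tl_sat w j Y"
  unfolding dsem_def yonly_def by auto
lemma dsem_append[simp]: "dsem w i j (D @ E) \<longleftrightarrow> dsem w i j D \<or> dsem w i j E"
  unfolding dsem_def by auto

fun tand :: "'a trm \<Rightarrow> 'a trm \<Rightarrow> 'a trm list" where
  "tand (X,Y,q,G) (X',Y',q',G') = (if q = q' then [(TAnd X X', TAnd Y Y', q, GAnd G G')] else [])"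

lemma osem_uniq: "osem q i j \<Longrightarrow> osem q' i j \<Longrightarrow> q = q'"
  by (cases q; cases q') auto

lemma tand_sem: "(\<exists>u\<in>set (tand t t'). tsem w i j u) \<longleftrightarrow> tsem w i j t \<and> tsem w i j t'"
  by (cases t; cases t') (auto dest: osem_uniq)

definition dconj :: "'a trm list \<Rightarrow> 'a trm list \<Rightarrow> 'a trm list" where
  "dconj D E = concat (map (\<lambda>t. concat (map (tand t) E)) D)"

lemma dsem_dconj[simp]: "dsem w i j (dconj D E) \<longleftrightarrow> dsem w i j D \<and> dsem w i j E"
proof -
  have "dsem w i j (dconj D E) \<longleftrightarrow> (\<exists>t\<in>set D. \<exists>t'\<in>set E. \<exists>u\<in>set (tand t t'). tsem w i j u)"
    unfolding dsem_def dconj_def by auto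
  also have "\<dots> \<longleftrightarrow> (\<exists>t\<in>set D. \<exists>t'\<in>set E. tsem w i j t \<and> tsem w i j t')"
    by (simp only: tand_sem)
  also have "\<dots> \<longleftrightarrow> dsem w i j D \<and> dsem w i j E" unfolding dsem_def by blast
  finally show ?thesis .
qed

fun negt :: "'a trm \<Rightarrow> 'a trm list" where
  "negt (X,Y,q,G) = xonly (TNot X) @ yonly (TNot Y) @
     map (\<lambda>q'. (TTrue,TTrue,q',Gtrue)) (filter (\<lambda>q'. q' \<noteq> q) [LT,EQ,GT]) @ [(TTrue,TTrue,q,GNot G)]"

lemma dsem_Nil[simp]: "\<not> dsem w i j []" by (simp add: dsem_def)
lemma dsem_Cons[simp]: "dsem w i j (t # D) \<longleftrightarrow> tsem w i j t \<or> dsem w i j D" by (simp add: dsem_def)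

lemma osem_other: "(\<exists>q'\<in>set (filter (\<lambda>q'. q' \<noteq> q) [LT,EQ,GT]). osem q' i j) \<longleftrightarrow> \<not> osem q i j"
  by (cases q; cases "i < j"; cases "i = j") auto

lemma dsem_map_ord: "dsem w i j (map (\<lambda>q'. (TTrue,TTrue,q',Gtrue)) L) \<longleftrightarrow> (\<exists>q'\<in>set L. osem q' i j)"
  by (induct L) auto

lemma negt_sem: "dsem w i j (negt t) \<longleftrightarrow> \<not> tsem w i j t"
proof (cases t)
  case (fields X Y q G)
  show ?thesis unfolding fields negt.simps dsem_append dsem_xonly dsem_yonly dsem_map_ord osem_other
    by auto
qed

fun dneg :: "'a trm list \<Rightarrow> 'a trm list" where
  "dneg [] = xonly TTrue"
| "dneg (t # D) = dconj (negt t) (dneg D)"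

lemma dsem_dneg[simp]: "dsem w i j (dneg D) \<longleftrightarrow> \<not> dsem w i j D"
  by (induct D) (simp_all add: negt_sem)

lemma empty_btw[simp]: "{k::nat. i < k \<and> k < i \<and> P k} = {}" by auto

lemma guard_diag: "guard_sem w i i G = guard_sem w' i' i' G"
proof (induct G)
  case (GAtom c) then show ?case by (cases c) (simp add: count_between_def)
qed auto

definition gc :: "'a guard \<Rightarrow> 'a tl" where "gc G = (if guard_sem [] 0 0 G then TTrue else TFalse)"
lemma sat_gc[simp]: "tl_sat w i (gc G) \<longleftrightarrow> guard_sem w i i G"
  unfolding gc_def using guard_diag[of "[]" 0 G w i] by auto

fun eyt :: "'a trm \<Rightarrow> 'a tl" where
  "eyt (X,Y,q,G) = TAnd X (case q of LT \<Rightarrow> TF G Y | GT \<Rightarrow> TP G Y | EQ \<Rightarrow> TAnd Y (gc G))"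
fun ext :: "'a trm \<Rightarrow> 'a tl" where
  "ext (X,Y,q,G) = TAnd Y (case q of LT \<Rightarrow> TP G X | GT \<Rightarrow> TF G X | EQ \<Rightarrow> TAnd X (gc G))"
fun dgt :: "'a trm \<Rightarrow> 'a tl" where
  "dgt (X,Y,q,G) = (case q of EQ \<Rightarrow> TAnd X (TAnd Y (gc G)) | _ \<Rightarrow> TFalse)"

definition exY :: "'a trm list \<Rightarrow> 'a tl" where "exY D = tdisj (map eyt D)"
definition exX :: "'a trm list \<Rightarrow> 'a tl" where "exX D = tdisj (map ext D)"
definition diag :: "'a trm list \<Rightarrow> 'a tl" where "diag D = tdisj (map dgt D)"

lemma tsem_LT: "tsem w i p (X,Y,LT,G) \<longleftrightarrow> tl_sat w i X \<and> tl_sat w p Y \<and> i < p \<and> guard_sem w i p G"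
  by (auto simp: min_def max_def)
lemma tsem_GT: "tsem w i p (X,Y,GT,G) \<longleftrightarrow> tl_sat w i X \<and> tl_sat w p Y \<and> p < i \<and> guard_sem w p i G"
  by (auto simp: min_def max_def)
lemma tsem_EQ: "tsem w i p (X,Y,EQ,G) \<longleftrightarrow> tl_sat w i X \<and> tl_sat w i Y \<and> p = i \<and> guard_sem w i i G"
  by auto

lemma eyt_sem: "i < length w \<Longrightarrow> tl_sat w i (eyt t) \<longleftrightarrow> (\<exists>p<length w. tsem w i p t)"
proof (cases t)
  case (fields X Y q G)
  assume i: "i < length w"
  show ?thesis
  proof (cases q)
    case LT then show ?thesis using fields i by (simp only: tsem_LT eyt.simps ord3.case tl_sat.simps) blast
  next
    case GT
    have "tl_sat w i (eyt t) \<longleftrightarrow> tl_sat w i X \<and> (\<exists>p. p < i \<and> guard_sem w p i G \<and> tl_sat w p Y)"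
      using fields GT by simp
    also have "\<dots> \<longleftrightarrow> (\<exists>p<length w. tsem w i p t)"
      unfolding fields GT tsem_GT using i by (meson order.strict_trans)
    finally show ?thesis .
  next
    case EQ then show ?thesis using fields i by (simp only: tsem_EQ eyt.simps ord3.case tl_sat.simps sat_gc) blast
  qed
qed

lemma ext_sem: "j < length w \<Longrightarrow> tl_sat w j (ext t) \<longleftrightarrow> (\<exists>p<length w. tsem w p j t)"
proof (cases t)
  case (fields X Y q G)
  assume j: "j < length w"
  show ?thesis
  proof (cases q)
    case GT then show ?thesis using fields j by (simp only: tsem_GT ext.simps ord3.case tl_sat.simps) blast
  next
    case LT
    have "tl_sat w j (ext t) \<longleftrightarrow> tl_sat w j Y \<and> (\<exists>p. p < j \<and> guard_sem w p j G \<and> tl_sat w p X)"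
      using fields LT by simp
    also have "\<dots> \<longleftrightarrow> (\<exists>p<length w. tsem w p j t)"
      unfolding fields LT tsem_LT using j by (meson order.strict_trans)
    finally show ?thesis .
  next
    case EQ then show ?thesis using fields j by (simp only: tsem_EQ ext.simps ord3.case tl_sat.simps sat_gc) blast
  qed
qed

lemma exY_sem: "i < length w \<Longrightarrow> tl_sat w i (exY D) \<longleftrightarrow> (\<exists>p<length w. dsem w i p D)"
proof -
  assume l: "i < length w"
  have "tl_sat w i (exY D) \<longleftrightarrow> (\<exists>t\<in>set D. tl_sat w i (eyt t))" by (simp add: exY_def)
  also have "\<dots> \<longleftrightarrow> (\<exists>t\<in>set D. \<exists>p<length w. tsem w i p t)" using eyt_sem[OF l] by simp
  also have "\<dots> \<longleftrightarrow> (\<exists>p<length w. dsem w i p D)" unfolding dsem_def by blast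
  finally show ?thesis .
qed

lemma exX_sem: "j < length w \<Longrightarrow> tl_sat w j (exX D) \<longleftrightarrow> (\<exists>p<length w. dsem w p j D)"
proof -
  assume l: "j < length w"
  have "tl_sat w j (exX D) \<longleftrightarrow> (\<exists>t\<in>set D. tl_sat w j (ext t))" by (simp add: exX_def)
  also have "\<dots> \<longleftrightarrow> (\<exists>t\<in>set D. \<exists>p<length w. tsem w p j t)" using ext_sem[OF l] by simp
  also have "\<dots> \<longleftrightarrow> (\<exists>p<length w. dsem w p j D)" unfolding dsem_def by blast
  finally show ?thesis .
qed

lemma dgt_sem: "tl_sat w i (dgt t) \<longleftrightarrow> tsem w i i t"
  by (cases t) (auto split: ord3.splits)

lemma diag_sem: "tl_sat w i (diag D) \<longleftrightarrow> dsem w i i D"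
  unfolding diag_def dsem_def by (simp add: dgt_sem)

fun ordof :: "var \<Rightarrow> ord3" where "ordof VX = LT" | "ordof VY = GT"

fun dfo :: "'a fo2 \<Rightarrow> 'a trm list" where
  "dfo (FLess x y) = (if x = y then [] else [(TTrue,TTrue,ordof x,Gtrue)])"
| "dfo (FEq x y) = (if x = y then xonly TTrue else [(TTrue,TTrue,EQ,Gtrue)])"
| "dfo (FLetter a x) = (if x = VX then xonly (TLetter a) else yonly (TLetter a))"
| "dfo (FBtw a x y) = (if x = y then [] else [(TTrue,TTrue,ordof x,GAtom (Constr {a} CGe 1))])"
| "dfo (FThr a k x y) = (if x = y then [] else [(TTrue,TTrue,ordof x,GAtom (Constr {a} CGe k))])"
| "dfo (FNot \<phi>) = dneg (dfo \<phi>)"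
| "dfo (FAnd \<phi> \<psi>) = dconj (dfo \<phi>) (dfo \<psi>)"
| "dfo (FOr \<phi> \<psi>) = dfo \<phi> @ dfo \<psi>"
| "dfo (FEx x \<phi>) = (if x = VY then xonly (exY (dfo \<phi>)) else yonly (exX (dfo \<phi>)))"

lemma cb_single: "count_between w i j {a} = card {z. i < z \<and> z < j \<and> w ! z = a}"
  unfolding count_between_def by simp

lemma btw_card: "(\<exists>z. i < z \<and> z < j \<and> w ! z = a) \<longleftrightarrow> Suc 0 \<le> card {z. i < z \<and> z < j \<and> w ! z = (a::'a)}"
proof -
  have "finite {z. i < z \<and> z < j \<and> w ! z = a}" by simp
  then show ?thesis by (auto simp: Suc_le_eq card_gt_0_iff)
qed

lemma dfo_correct: "s VX < length w \<Longrightarrow> s VY < length w \<Longrightarrow>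
   fo_sat w s \<phi> \<longleftrightarrow> dsem w (s VX) (s VY) (dfo \<phi>)"
proof (induct \<phi> arbitrary: s)
  case (FLess x y) then show ?case by (cases x; cases y) auto
next
  case (FEq x y) then show ?case by (cases x; cases y) auto
next
  case (FLetter a x) then show ?case by (cases x) auto
next
  case (FBtw a x y) then show ?case
    by (cases x; cases y) (auto simp: cb_single btw_card[symmetric] min_def max_def)
next
  case (FThr a k x y) then show ?case
    by (cases x; cases y) (auto simp: cb_single min_def max_def)
next
  case (FEx x \<phi>)
  show ?case
  proof (cases x)
    case VX
    have "fo_sat w s (FEx x \<phi>) \<longleftrightarrow> (\<exists>p<length w. dsem w p (s VY) (dfo \<phi>))"
      using FEx VX by auto
    then show ?thesis using VX exX_sem[OF FEx.prems(2)] by simp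
  next
    case VY
    have "fo_sat w s (FEx x \<phi>) \<longleftrightarrow> (\<exists>p<length w. dsem w (s VX) p (dfo \<phi>))"
      using FEx VY by auto
    then show ?thesis using VY exY_sem[OF FEx.prems(1)] by simp
  qed
qed auto

lemma fo_tl: "fo_lang \<phi> - {[]} = tl_lang (diag (dfo \<phi>))"
proof -
  have "w \<noteq> [] \<Longrightarrow> fo_sat w (\<lambda>_. 0) \<phi> \<longleftrightarrow> tl_sat w 0 (diag (dfo \<phi>))" for w
    using dfo_correct[of "\<lambda>_. 0" w \<phi>] by (simp add: diag_sem)
  then show ?thesis unfolding fo_lang_def tl_lang_def by auto
qed



fun flip :: "var \<Rightarrow> var" where "flip VX = VY" | "flip VY = VX"

lemma flip_neq[simp]: "flip x \<noteq> x" "x \<noteq> flip x" by (cases x; simp)+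

fun fdisj :: "'a fo2 \<Rightarrow> 'a fo2 list \<Rightarrow> 'a fo2" where
  "fdisj d [] = d" | "fdisj d (x # xs) = FOr x (fdisj d xs)"

lemma sat_fdisj: "\<not> fo_sat w s d \<Longrightarrow> fo_sat w s (fdisj d xs) \<longleftrightarrow> (\<exists>x\<in>set xs. fo_sat w s x)"
  by (induct xs) auto

lemma free_fdisj: "fo_free (fdisj d xs) = fo_free d \<union> (\<Union>x\<in>set xs. fo_free x)"
  by (induct xs) auto

lemma thr_fdisj: "uses_Thr (fdisj d xs) \<longleftrightarrow> uses_Thr d \<or> (\<exists>x\<in>set xs. uses_Thr x)"
  by (induct xs) auto

fun gfo :: "'a guard \<Rightarrow> var \<Rightarrow> var \<Rightarrow> 'a fo2" where
  "gfo (GAtom (Constr B r k)) u v = FNot (fdisj (FLess u u) (map (\<lambda>b. FBtw b u v) (lst B)))"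
| "gfo _ u v = FEq u u"

fun tof :: "var \<Rightarrow> 'a tl \<Rightarrow> 'a fo2" where
  "tof x (TLetter a) = FLetter a x"
| "tof x (TAnd \<phi> \<psi>) = FAnd (tof x \<phi>) (tof x \<psi>)"
| "tof x (TOr \<phi> \<psi>) = FOr (tof x \<phi>) (tof x \<psi>)"
| "tof x (TNot \<phi>) = FNot (tof x \<phi>)"
| "tof x (TF g \<phi>) = FEx (flip x) (FAnd (FLess x (flip x)) (FAnd (gfo g x (flip x)) (tof (flip x) \<phi>)))"
| "tof x (TP g \<phi>) = FEx (flip x) (FAnd (FLess (flip x) x) (FAnd (gfo g (flip x) x) (tof (flip x) \<phi>)))"

lemma gfo_sem: "guard_Inv (g :: ('a::finite) guard) \<Longrightarrow> fo_sat w s (gfo g u v) \<longleftrightarrow> guard_sem w (s u) (s v) g"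
proof -
  assume "guard_Inv g"
  then obtain B where g: "g = GAtom (Constr B CEq 0)" by (auto simp: guard_Inv_def is_inv_constr_def)
  have "fo_sat w s (gfo g u v) \<longleftrightarrow> \<not> (\<exists>b\<in>B. \<exists>z. s u < z \<and> z < s v \<and> w ! z = b)"
    using g by (simp add: sat_fdisj set_lst)
  also have "\<dots> \<longleftrightarrow> guard_sem w (s u) (s v) g" using g by (auto simp: count_between_0)
  finally show ?thesis .
qed

lemma tof_correct: "(\<forall>g\<in>tl_guards \<phi>. guard_Inv g) \<Longrightarrow> s x < length w \<Longrightarrow>
  fo_sat w s (tof x \<phi>) \<longleftrightarrow> tl_sat w (s x) (\<phi> :: ('a::finite) tl)"
proof (induct \<phi> arbitrary: x s)
  case (TF g \<phi>)
  have ih: "p < length w \<Longrightarrow> fo_sat w (s(flip x := p)) (tof (flip x) \<phi>) \<longleftrightarrow> tl_sat w p \<phi>" for p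
    using TF.hyps[of "s(flip x := p)" "flip x"] TF.prems by (simp only: fun_upd_same tl_guards.simps ball_simps) blast
  have "fo_sat w s (tof x (TF g \<phi>)) \<longleftrightarrow> (\<exists>p<length w. s x < p \<and> guard_sem w (s x) p g \<and> tl_sat w p \<phi>)"
    using TF.prems by (simp add: gfo_sem) (use ih in blast)
  then show ?case by auto
next
  case (TP g \<phi>)
  have ih: "p < length w \<Longrightarrow> fo_sat w (s(flip x := p)) (tof (flip x) \<phi>) \<longleftrightarrow> tl_sat w p \<phi>" for p
    using TP.hyps[of "s(flip x := p)" "flip x"] TP.prems by (simp only: fun_upd_same tl_guards.simps ball_simps) blast
  have "fo_sat w s (tof x (TP g \<phi>)) \<longleftrightarrow> (\<exists>p<length w. p < s x \<and> guard_sem w p (s x) g \<and> tl_sat w p \<phi>)"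
    using TP.prems by (simp add: gfo_sem) (use ih in blast)
  then show ?case using TP.prems by auto
qed auto

lemma free_gfo: "fo_free (gfo g u v) \<subseteq> {u, v}"
  by (cases "(g,u,v)" rule: gfo.cases) (auto simp: free_fdisj)

lemma thr_gfo: "\<not> uses_Thr (gfo g u v)"
  by (cases "(g,u,v)" rule: gfo.cases) (auto simp: thr_fdisj)

lemma flip_cases: "y \<noteq> x \<Longrightarrow> y = flip x" by (cases x; cases y) auto

lemma free_tof: "fo_free (tof x \<phi>) \<subseteq> {x}"
proof (induct \<phi> arbitrary: x)
  case (TF g \<phi>) then show ?case using free_gfo[of g x "flip x"] by (auto dest: flip_cases)
next
  case (TP g \<phi>) then show ?case using free_gfo[of g "flip x" x] by (auto dest: flip_cases)
qed auto

lemma thr_tof: "\<not> uses_Thr (tof x \<phi>)"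
  by (induct \<phi> arbitrary: x) (auto simp: thr_gfo)

definition sent :: "'a tl \<Rightarrow> 'a fo2" where
  "sent \<phi> = FEx VX (FAnd (FNot (FEx VY (FLess VY VX))) (tof VX \<phi>))"

lemma sent_free: "fo_free (sent \<phi>) = {}"
  using free_tof[of VX \<phi>] by (auto simp: sent_def)

lemma sent_thr: "\<not> uses_Thr (sent \<phi>)"
  by (simp add: sent_def thr_tof)

lemma sent_lang: "(\<forall>g\<in>tl_guards \<phi>. guard_Inv g) \<Longrightarrow> fo_lang (sent \<phi>) = tl_lang (\<phi> :: ('a::finite) tl)"
proof -
  assume inv: "\<forall>g\<in>tl_guards \<phi>. guard_Inv g"
  have "fo_sat w (\<lambda>_. 0) (sent \<phi>) \<longleftrightarrow> (\<exists>p<length w. \<not>(\<exists>q<length w. q < p) \<and> tl_sat w p \<phi>)" for w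
  proof -
    have ih: "p < length w \<Longrightarrow> fo_sat w ((\<lambda>_. 0)(VX := p)) (tof VX \<phi>) \<longleftrightarrow> tl_sat w p \<phi>" for p
      using tof_correct[OF inv, of "(\<lambda>_. 0)(VX := p)" VX w] by (simp only: fun_upd_same)
    show ?thesis unfolding sent_def by simp (use ih in blast)
  qed
  also have "(\<exists>p<length w. \<not>(\<exists>q<length w. q < p) \<and> tl_sat w p \<phi>) \<longleftrightarrow> w \<noteq> [] \<and> tl_sat w 0 \<phi>" for w
  proof
    assume "\<exists>p<length w. \<not>(\<exists>q<length w. q < p) \<and> tl_sat w p \<phi>"
    then obtain p where "p < length w" "\<not>(\<exists>q<length w. q < p)" "tl_sat w p \<phi>" by blast
    then show "w \<noteq> [] \<and> tl_sat w 0 \<phi>" by (cases p) (auto, metis zero_less_Suc order.strict_trans)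
  qed auto
  finally show ?thesis unfolding fo_lang_def tl_lang_def by auto
qed

fun b2t :: "'a fo2 \<Rightarrow> 'a fo2" where
  "b2t (FBtw a x y) = FThr a 1 x y"
| "b2t (FNot \<phi>) = FNot (b2t \<phi>)"
| "b2t (FAnd \<phi> \<psi>) = FAnd (b2t \<phi>) (b2t \<psi>)"
| "b2t (FOr \<phi> \<psi>) = FOr (b2t \<phi>) (b2t \<psi>)"
| "b2t (FEx x \<phi>) = FEx x (b2t \<phi>)"
| "b2t \<phi> = \<phi>"

lemma b2t_sat: "fo_sat w s (b2t \<phi>) = fo_sat w s \<phi>"
proof (induct \<phi> arbitrary: s)
  case (FBtw a x y)
  show ?case using btw_card[of "s x" "s y" w a] by auto
qed auto

lemma b2t_free: "fo_free (b2t \<phi>) = fo_free \<phi>" by (induct \<phi>) auto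
lemma b2t_btw: "\<not> uses_Btw (b2t \<phi>)" by (induct \<phi>) auto
lemma b2t_lang: "fo_lang (b2t \<phi>) = fo_lang \<phi>" by (simp add: fo_lang_def b2t_sat)



lemma fam_mono: "(\<And>g. G g \<Longrightarrow> H g) \<Longrightarrow> tl_family G \<subseteq> tl_family H"
  unfolding tl_family_def by blast

lemma BTh_Inv: "tl_family (guard_BTh :: ('a::finite) guard \<Rightarrow> bool) \<subseteq> tl_family guard_Inv"
proof
  fix L assume "L \<in> tl_family (guard_BTh :: 'a guard \<Rightarrow> bool)"
  then obtain \<phi> :: "'a tl" where L: "L = tl_lang \<phi>" unfolding tl_family_def by blast
  then have "L = tl_lang (tr \<phi>)" by (simp add: tl_lang_tr)
  then show "L \<in> tl_family guard_Inv" unfolding tl_family_def using tr_Inv by blast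
qed

lemma all_BTh: "tl_family G \<subseteq> tl_family guard_BTh" by (rule fam_mono) (simp add: guard_BTh_def)

lemma Inv_Th: "guard_Inv g \<Longrightarrow> guard_Th g" by (auto simp: guard_Inv_def guard_Th_def)
lemma Inv_BInv: "guard_Inv g \<Longrightarrow> guard_BInv g" by (auto simp: guard_Inv_def guard_BInv_def)

lemma fam_eq: "tl_family G = tl_family (guard_Inv :: ('a::finite) guard \<Rightarrow> bool)"
  if "\<And>g. guard_Inv g \<Longrightarrow> G g" for G :: "('a::finite) guard \<Rightarrow> bool"
proof (rule equalityI)
  show "tl_family G \<subseteq> tl_family guard_Inv" using all_BTh[of G] BTh_Inv by (rule subset_trans)
  show "tl_family guard_Inv \<subseteq> tl_family G" using fam_mono[OF that] .
qed

definition Eps :: "'a fo2" where "Eps = FNot (FEx VX (FEq VX VX))"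
lemma Eps_lang: "fo_lang Eps = {[]}" by (auto simp: Eps_def fo_lang_def)
lemma Eps_free: "fo_free Eps = {}" by (simp add: Eps_def)
lemma Eps_thr: "\<not> uses_Thr Eps" by (simp add: Eps_def)

lemma Th_Inv_fo: "fo2_Th_family \<subseteq> (fo2_Inv_family :: ('a::finite) list set set)"
proof
  fix L :: "'a list set" assume "L \<in> fo2_Th_family"
  then obtain \<phi> :: "'a fo2" where L: "L = fo_lang \<phi>" unfolding fo2_Th_family_def by blast
  define \<theta> where "\<theta> = sent (tr (diag (dfo \<phi>)))"
  have l\<theta>: "fo_lang \<theta> = L - {[]}"
  proof -
    have inv: "\<forall>g\<in>tl_guards (tr (diag (dfo \<phi>))). guard_Inv g" using tr_Inv by blast
    show ?thesis unfolding \<theta>_def L sent_lang[OF inv] tl_lang_tr fo_tl ..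
  qed
  define \<theta>' where "\<theta>' = (if [] \<in> L then FOr \<theta> Eps else \<theta>)"
  have "fo_lang \<theta>' = L"
  proof (cases "[] \<in> L")
    case True
    have "fo_lang (FOr \<theta> Eps) = fo_lang \<theta> \<union> fo_lang Eps" by (auto simp: fo_lang_def)
    then show ?thesis using True l\<theta> Eps_lang unfolding \<theta>'_def by auto
  next
    case False then show ?thesis using l\<theta> unfolding \<theta>'_def by auto
  qed
  moreover have "fo_free \<theta>' = {}" "\<not> uses_Thr \<theta>'"
    unfolding \<theta>'_def \<theta>_def by (simp_all add: sent_free sent_thr Eps_free Eps_thr)
  ultimately show "L \<in> fo2_Inv_family" unfolding fo2_Inv_family_def by blast
qed

lemma Inv_Th_fo: "fo2_Inv_family \<subseteq> (fo2_Th_family :: 'a list set set)"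
proof
  fix L :: "'a list set" assume "L \<in> fo2_Inv_family"
  then obtain \<phi> :: "'a fo2" where L: "L = fo_lang \<phi>" "fo_free \<phi> = {}" unfolding fo2_Inv_family_def by blast
  then show "L \<in> fo2_Th_family" unfolding fo2_Th_family_def
    using b2t_lang[of \<phi>] b2t_free[of \<phi>] b2t_btw[of \<phi>] by auto
qed

lemma last_part: "(\<lambda>L. L - {[]}) ` (fo2_Th_family :: ('a::finite) list set set) = tl_family guard_Th"
proof
  show "(\<lambda>L. L - {[]}) ` (fo2_Th_family :: 'a list set set) \<subseteq> tl_family guard_Th"
  proof
    fix L' assume "L' \<in> (\<lambda>L. L - {[]}) ` (fo2_Th_family :: 'a list set set)"
    then obtain \<phi> :: "'a fo2" where L: "L' = fo_lang \<phi> - {[]}" unfolding fo2_Th_family_def by blast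
    then have "L' = tl_lang (tr (diag (dfo \<phi>)))" by (simp add: fo_tl tl_lang_tr)
    then have "L' \<in> tl_family guard_Inv" unfolding tl_family_def using tr_Inv by blast
    then show "L' \<in> tl_family guard_Th" using fam_mono[of guard_Inv guard_Th] Inv_Th by blast
  qed
next
  show "tl_family guard_Th \<subseteq> (\<lambda>L. L - {[]}) ` (fo2_Th_family :: 'a list set set)"
  proof
    fix L assume "L \<in> tl_family (guard_Th :: 'a guard \<Rightarrow> bool)"
    then obtain \<phi> :: "'a tl" where L: "L = tl_lang \<phi>" unfolding tl_family_def by blast
    define \<theta> where "\<theta> = b2t (sent (tr \<phi>))"
    have inv: "\<forall>g\<in>tl_guards (tr \<phi>). guard_Inv g" using tr_Inv by blast
    have "fo_lang \<theta> = L" unfolding \<theta>_def L b2t_lang sent_lang[OF inv] tl_lang_tr ..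
    moreover have "[] \<notin> L" unfolding L tl_lang_def by simp
    ultimately have "L = fo_lang \<theta> - {[]}" by simp
    moreover have "fo_free \<theta> = {}" "\<not> uses_Btw \<theta>"
      unfolding \<theta>_def by (simp_all add: b2t_free sent_free b2t_btw)
    ultimately show "L \<in> (\<lambda>L. L - {[]}) ` fo2_Th_family" unfolding fo2_Th_family_def by blast
  qed
qed

theorem theorem2:
  shows "tl_family (guard_BTh :: ('a::finite) guard \<Rightarrow> bool) = tl_family guard_Th
       \<and> tl_family (guard_Inv :: 'a guard \<Rightarrow> bool) = tl_family guard_Th
       \<and> tl_family (guard_BInv :: 'a guard \<Rightarrow> bool) = tl_family guard_Th
       \<and> (fo2_Inv_family :: 'a list set set) = fo2_Th_family
       \<and> (\<lambda>L. L - {[]}) ` (fo2_Th_family :: 'a list set set) = tl_family guard_Th"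
proof -
  have a: "tl_family (guard_BTh :: 'a guard \<Rightarrow> bool) = tl_family guard_Inv"
    by (rule fam_eq) (simp add: guard_BTh_def)
  have b: "tl_family (guard_Th :: 'a guard \<Rightarrow> bool) = tl_family guard_Inv"
    by (rule fam_eq) (rule Inv_Th)
  have c: "tl_family (guard_BInv :: 'a guard \<Rightarrow> bool) = tl_family guard_Inv"
    by (rule fam_eq) (rule Inv_BInv)
  have d: "(fo2_Inv_family :: 'a list set set) = fo2_Th_family"
    using Th_Inv_fo Inv_Th_fo by (rule equalityI[rotated])
  have e: "(\<lambda>L. L - {[]}) ` (fo2_Th_family :: 'a list set set) = tl_family guard_Th" by (rule last_part)
  show ?thesis by (intro conjI) (simp_all only: a b c d e)
qed


end
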